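(* Assume that the lsc function $f:\mathbb{R}^n\to(-\infty,\infty]$ is prox-regular and subdifferentially continuous at $\bar x\in\operatorname{dom} f$ for the subgradient $\bar x^*\in\partial f(\bar x)$. Then there is a neighborhood $U\times V$ of $(\bar x,\bar x^* )$ such that for every $(x,x^* )\in \operatorname{gph}\partial f\cap (U\times V)$ the function $f$ is prox-regular and subdifferentially continuous at $x$ for $x^*$ and \begin{gather*}T_{\operatorname{gph} \partial f}^f(x,x^* )= T_{\operatorname{gph} \partial f}(x,x^* ),\ \widehat N_{\operatorname{gph} \partial f}^f(x,x^* )= \widehat N_{\operatorname{gph} \partial f}(x,x^* ),\ N_{\operatorname{gph} \partial f}^f(x,x^* )= N_{\operatorname{gph} \partial f}(x,x^* ),\\ D_f(\partial f)(x,x^* )=D(\partial f)(x,x^* ),\ \widehat D^*_f(\partial f)(x,x^* )=\widehat D^*(\partial f)(x,x^* ),\ D^*_f(\partial f)(x,x^* )=\widehat D^*(\partial f)(x,x^* ),\\ \mathcal{S}_f(\partial f)(x,x^* )=\mathcal{S}(\partial f)(x,x^* ),\ \mathcal{S}^*_f(\partial f)(x,x^* )=\mathcal{S}^*(\partial f)(x,x^* ). \end{gather*}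
   Context: $\partial f$ denotes the limiting subdifferential, $\operatorname{gph}$ the graph. $f$ is prox-regular at $\bar x$ for $\bar x^*$ if $f$ is finite at $\bar x$, $\bar x^*\in\partial f(\bar x)$, and there exist $\epsilon>0$, $r\ge 0$ with $f(x')\ge f(x)+\langle x^*,x'-x\rangle-\frac r2\|x'-x\|^2$ whenever $\|x'-\bar x\|<\epsilon$, $(x,x^* )\in\operatorname{gph}\partial f$, $\|x-\bar x\|<\epsilon$, $\|x^*-\bar x^*\|<\epsilon$, $f(x)<f(\bar x)+\epsilon$. $f$ is subdifferentially continuous at $\bar x$ for $\bar x^*$ if $(x_k,x_k^* )\to(\bar x,\bar x^* )$ with $(x_k,x_k^* )\in\operatorname{gph}\partial f$ implies $f(x_k)\to f(\bar x)$. Write $(x_k,x_k^* )\to_f(\bar x,\bar x^* )$ ($f$-attentive convergence in $\operatorname{gph}\partial f$) if $(x_k,x_k^* )\in\operatorname{gph}\partial f$, $(x_k,x_k^* )\to(\bar x,\bar x^* )$ and $f(x_k)\to f(\bar x)$. $T_\Omega$, $\widehat N_\Omega=(T_\Omega)^\circ$, $N_\Omega$ are the tangent, regular normal and limiting normal cones; $D$, $\widehat D^*$, $D^*$ the graphical derivative, regular and limiting coderivative ($\operatorname{gph}\widehat D^*F(\bar x,\bar y)=\{(y^*,x^* ): (x^*,-y^* )\in\widehat N_{\operatorname{gph}F}(\bar x,\bar y)\}$, similarly $D^*$ with $N$). The $f$-attentive versions are defined by replacing ordinary convergence in $\operatorname{gph}\partial f$ by $f$-attentive convergence: $T^f_{\operatorname{gph}\partial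 f}(\bar x,\bar x^* )$ is the set of limits $\lim_k ((x_k,x_k^* )-(\bar x,\bar x^* ))/t_k$ with $t_k\downarrow0$, $(x_k,x_k^* )\to_f(\bar x,\bar x^* )$; $\widehat N^f_{\operatorname{gph}\partial f}:=(T^f_{\operatorname{gph}\partial f})^\circ$; $N^f_{\operatorname{gph}\partial f}(\bar x,\bar x^* )$ is the outer limit of $\widehat N^f_{\operatorname{gph}\partial f}(x,x^* )$ as $(x,x^* )\to_f(\bar x,\bar x^* )$; $D_f(\partial f)$, $\widehat D^*_f(\partial f)$, $D^*_f(\partial f)$ are built from these cones as the ordinary ones. With $\mathcal Z_{nn}$ the space of $n$-dimensional subspaces of $\mathbb R^n\times\mathbb R^n$ with metric $d(L_1,L_2)=\|P_{L_1}-P_{L_2}\|$ (orthogonal projections), the SC derivative $\mathcal S(\partial f)(\bar x,\bar x^* )$ is the set of $L\in\mathcal Z_{nn}$ that are limits of $T_{\operatorname{gph}\partial f}(x_k,x_k^* )\in\mathcal Z_{nn}$ along $(x_k,x_k^* )\to(\bar x,\bar x^* )$ in $\operatorname{gph}\partial f$; the $f$-attentive SC derivative $\mathcal S_f(\partial f)(\bar x,\bar x^* )$ is the set of limits of $T^f_{\operatorname{gph}\partial f}(x_k,x_k^* )\in\mathcal Z_{nn}$ along $(x_k,x_k^* )\to_f(\bar x,\bar x^* )$. Adjoint versions: $\mathcal S^*=\{L^*: L\in\mathcal S\}$, $\mathcal S^*_f=\{L^*:L\in\mathcal S_f\}$, where $L^*=\{(v^*,u^* ): (u^*,-v^* )\in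 L^\perp\}$. *)

theory Defs
  imports "HOL-Analysis.Analysis"
begin

definition lsc :: "('a::euclidean_space \<Rightarrow> ereal) \<Rightarrow> bool" where
  "lsc f \<longleftrightarrow> (\<forall>x. f x \<le> Liminf (at x) f)"

definition rsubdiff :: "('a::euclidean_space \<Rightarrow> ereal) \<Rightarrow> 'a \<Rightarrow> 'a set" where
  "rsubdiff f x = {v. \<bar>f x\<bar> \<noteq> \<infinity> \<and>
     (\<forall>e>0. \<exists>d>0. \<forall>x'. norm (x' - x) < d \<longrightarrow>
        f x' \<ge> f x + ereal (inner v (x' - x) - e * norm (x' - x)))}"

definition subdiff :: "('a::euclidean_space \<Rightarrow> ereal) \<Rightarrow> 'a \<Rightarrow> 'a set" where
  "subdiff f x = {v. \<bar>f x\<bar> \<noteq> \<infinity> \<and>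
     (\<exists>xs vs. xs \<longlonglongrightarrow> x \<and> (\<lambda>k. f (xs k)) \<longlonglongrightarrow> f x \<and>
        (\<forall>k. vs k \<in> rsubdiff f (xs k)) \<and> vs \<longlonglongrightarrow> v)}"

definition gph_subdiff :: "('a::euclidean_space \<Rightarrow> ereal) \<Rightarrow> ('a \<times> 'a) set" where
  "gph_subdiff f = {(x, v). v \<in> subdiff f x}"

definition prox_regular :: "('a::euclidean_space \<Rightarrow> ereal) \<Rightarrow> 'a \<Rightarrow> 'a \<Rightarrow> bool" where
  "prox_regular f xb vb \<longleftrightarrow> \<bar>f xb\<bar> \<noteq> \<infinity> \<and> vb \<in> subdiff f xb \<and>
     (\<exists>e>0. \<exists>r\<ge>0. \<forall>x' x v. norm (x' - xb) < e \<and> v \<in> subdiff f x \<and> norm (x - xb) < e \<and>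
         norm (v - vb) < e \<and> f x < f xb + ereal e \<longrightarrow>
         f x' \<ge> f x + ereal (inner v (x' - x) - r / 2 * (norm (x' - x))\<^sup>2))"

definition subdiff_continuous :: "('a::euclidean_space \<Rightarrow> ereal) \<Rightarrow> 'a \<Rightarrow> 'a \<Rightarrow> bool" where
  "subdiff_continuous f xb vb \<longleftrightarrow>
     (\<forall>xs vs. (\<forall>k. vs k \<in> subdiff f (xs k)) \<and> xs \<longlonglongrightarrow> xb \<and> vs \<longlonglongrightarrow> vb
        \<longrightarrow> (\<lambda>k. f (xs k)) \<longlonglongrightarrow> f xb)"

definition f_attentive_conv :: "('a::euclidean_space \<Rightarrow> ereal) \<Rightarrow> (nat \<Rightarrow> 'a \<times> 'a) \<Rightarrow> 'a \<times> 'a \<Rightarrow> bool" where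
  "f_attentive_conv f zs z \<longleftrightarrow> (\<forall>k. zs k \<in> gph_subdiff f) \<and> zs \<longlonglongrightarrow> z \<and>
     (\<lambda>k. f (fst (zs k))) \<longlonglongrightarrow> f (fst z)"

definition conv_in :: "'b::real_normed_vector set \<Rightarrow> (nat \<Rightarrow> 'b) \<Rightarrow> 'b \<Rightarrow> bool" where
  "conv_in S zs z \<longleftrightarrow> (\<forall>k. zs k \<in> S) \<and> zs \<longlonglongrightarrow> z"

definition tangent_gen :: "((nat \<Rightarrow> 'b) \<Rightarrow> 'b \<Rightarrow> bool) \<Rightarrow> 'b::real_normed_vector \<Rightarrow> 'b set" where
  "tangent_gen C z = {w. \<exists>zs t. C zs z \<and> (\<forall>k. t k > 0) \<and> t \<longlonglongrightarrow> 0 \<and>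
      (\<lambda>k. (zs k - z) /\<^sub>R t k) \<longlonglongrightarrow> w}"

definition polar :: "'b::real_inner set \<Rightarrow> 'b set" where
  "polar K = {w. \<forall>v\<in>K. inner w v \<le> 0}"

definition rnormal_gen :: "((nat \<Rightarrow> 'b) \<Rightarrow> 'b \<Rightarrow> bool) \<Rightarrow> 'b::real_inner \<Rightarrow> 'b set" where
  "rnormal_gen C z = polar (tangent_gen C z)"

definition lnormal_gen :: "((nat \<Rightarrow> 'b) \<Rightarrow> 'b \<Rightarrow> bool) \<Rightarrow> 'b::{real_inner,real_normed_vector} \<Rightarrow> 'b set" where
  "lnormal_gen C z = {w. \<exists>zs ws. C zs z \<and> (\<forall>k. ws k \<in> rnormal_gen C (zs k)) \<and> ws \<longlonglongrightarrow> w}"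

abbreviation tangent_cone :: "'b::real_normed_vector set \<Rightarrow> 'b \<Rightarrow> 'b set" where
  "tangent_cone S \<equiv> tangent_gen (conv_in S)"
abbreviation rnormal_cone :: "'b::real_inner set \<Rightarrow> 'b \<Rightarrow> 'b set" where
  "rnormal_cone S \<equiv> rnormal_gen (conv_in S)"
abbreviation lnormal_cone :: "'b::real_inner set \<Rightarrow> 'b \<Rightarrow> 'b set" where
  "lnormal_cone S \<equiv> lnormal_gen (conv_in S)"

abbreviation tangent_f :: "('a::euclidean_space \<Rightarrow> ereal) \<Rightarrow> 'a \<times> 'a \<Rightarrow> ('a \<times> 'a) set" where
  "tangent_f f \<equiv> tangent_gen (f_attentive_conv f)"
abbreviation rnormal_f :: "('a::euclidean_space \<Rightarrow> ereal) \<Rightarrow> 'a \<times> 'a \<Rightarrow> ('a \<times> 'a) set" where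
  "rnormal_f f \<equiv> rnormal_gen (f_attentive_conv f)"
abbreviation lnormal_f :: "('a::euclidean_space \<Rightarrow> ereal) \<Rightarrow> 'a \<times> 'a \<Rightarrow> ('a \<times> 'a) set" where
  "lnormal_f f \<equiv> lnormal_gen (f_attentive_conv f)"

definition graph_deriv_of :: "('a \<times> 'a) set \<Rightarrow> 'a::real_vector \<Rightarrow> 'a set" where
  "graph_deriv_of T u = {v. (u, v) \<in> T}"

definition coderiv_of :: "('a \<times> 'a) set \<Rightarrow> 'a::real_vector \<Rightarrow> 'a set" where
  "coderiv_of N ys = {xs. (xs, - ys) \<in> N}"

text \<open>D(\<partial>f), \<^emph>\<open>regular\<close> D^*(\<partial>f), D^*(\<partial>f) and their f-attentive versions at (x,x*).\<close>
definition D_subdiff where "D_subdiff f x v = graph_deriv_of (tangent_cone (gph_subdiff f) (x, v))"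
definition rD_subdiff where "rD_subdiff f x v = coderiv_of (rnormal_cone (gph_subdiff f) (x, v))"
definition lD_subdiff where "lD_subdiff f x v = coderiv_of (lnormal_cone (gph_subdiff f) (x, v))"
definition D_f_subdiff where "D_f_subdiff f x v = graph_deriv_of (tangent_f f (x, v))"
definition rD_f_subdiff where "rD_f_subdiff f x v = coderiv_of (rnormal_f f (x, v))"
definition lD_f_subdiff where "lD_f_subdiff f x v = coderiv_of (lnormal_f f (x, v))"

definition Znn :: "('a::euclidean_space \<times> 'a) set set" where
  "Znn = {L. subspace L \<and> dim L = DIM('a)}"

definition proj :: "('a::euclidean_space \<times> 'a) set \<Rightarrow> 'a \<times> 'a \<Rightarrow> 'a \<times> 'a" where
  "proj L = closest_point L"

definition subspace_dist :: "('a::euclidean_space \<times> 'a) set \<Rightarrow> ('a \<times> 'a) set \<Rightarrow> real" where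
  "subspace_dist L1 L2 = onorm (\<lambda>z. proj L1 z - proj L2 z)"

definition SC_gen :: "((nat \<Rightarrow> 'a \<times> 'a) \<Rightarrow> 'a \<times> 'a \<Rightarrow> bool) \<Rightarrow> ('a \<times> 'a \<Rightarrow> ('a \<times> 'a) set)
     \<Rightarrow> 'a::euclidean_space \<times> 'a \<Rightarrow> ('a \<times> 'a) set set" where
  "SC_gen C T z = {L \<in> Znn. \<exists>zs. C zs z \<and> (\<forall>k. T (zs k) \<in> Znn) \<and>
      (\<lambda>k. subspace_dist (T (zs k)) L) \<longlonglongrightarrow> 0}"

definition SC_subdiff where
  "SC_subdiff f x v = SC_gen (conv_in (gph_subdiff f)) (tangent_cone (gph_subdiff f)) (x, v)"
definition SC_f_subdiff where
  "SC_f_subdiff f x v = SC_gen (f_attentive_conv f) (tangent_f f) (x, v)"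

definition adjoint_subspace :: "('a::euclidean_space \<times> 'a) set \<Rightarrow> ('a \<times> 'a) set" where
  "adjoint_subspace L = {(vs, us). (us, - vs) \<in> orthogonal_comp L}"

definition SC_adj_subdiff where "SC_adj_subdiff f x v = adjoint_subspace ` SC_subdiff f x v"
definition SC_f_adj_subdiff where "SC_f_adj_subdiff f x v = adjoint_subspace ` SC_f_subdiff f x v"

end

theory Submission
  imports Defs
begin

lemma tangent_gen_eqI:
  assumes "\<And>zs. C1 zs z = C2 zs z"
  shows "tangent_gen C1 z = tangent_gen C2 z"
  unfolding tangent_gen_def using assms by simp

lemma lnormal_gen_eqI:
  fixes C1 C2 :: "(nat \<Rightarrow> 'b::real_inner) \<Rightarrow> 'b \<Rightarrow> bool"
  assumes h1: "\<And>zs z. C1 zs z \<Longrightarrow> C2 zs z"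
  and h2: "\<And>zs z. P z \<Longrightarrow> C2 zs z \<Longrightarrow> C1 zs z"
  and h3: "\<And>zs z. P z \<Longrightarrow> C2 zs z \<Longrightarrow> \<exists>N. \<forall>k\<ge>N. P (zs k)"
  and h4: "\<And>zs z N. C2 zs z \<Longrightarrow> C2 (\<lambda>k. zs (k+N)) z"
  and Pz: "P z"
  shows "lnormal_gen C1 z = lnormal_gen C2 z"
proof -
  have req: "rnormal_gen C1 y = rnormal_gen C2 y" if "P y" for y
    unfolding rnormal_gen_def
    by (rule arg_cong[where f=polar], rule tangent_gen_eqI) (use h1 h2 that in blast)
  show ?thesis
  proof (intro set_eqI iffI)
    fix w assume "w \<in> lnormal_gen C1 z"
    then obtain zs ws where a: "C1 zs z" "\<forall>k. ws k \<in> rnormal_gen C1 (zs k)" "ws \<longlonglongrightarrow> w"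
      unfolding lnormal_gen_def by blast
    from h3[OF Pz h1[OF a(1)]] obtain N where N: "\<forall>k\<ge>N. P (zs k)" by blast
    have "C2 (\<lambda>k. zs (k+N)) z" using h4 h1 a(1) by blast
    moreover have "\<forall>k. ws (k+N) \<in> rnormal_gen C2 (zs (k+N))"
    proof
      fix k have P: "P (zs (k+N))" using N by simp
      show "ws (k+N) \<in> rnormal_gen C2 (zs (k+N))" using a(2) req[OF P] by metis
    qed
    moreover have "(\<lambda>k. ws (k+N)) \<longlonglongrightarrow> w" using a(3) by (rule LIMSEQ_ignore_initial_segment)
    ultimately show "w \<in> lnormal_gen C2 z" unfolding lnormal_gen_def mem_Collect_eq
      by (intro exI[of _ "\<lambda>k. zs (k+N)"] exI[of _ "\<lambda>k. ws (k+N)"] conjI)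
  next
    fix w assume "w \<in> lnormal_gen C2 z"
    then obtain zs ws where a: "C2 zs z" "\<forall>k. ws k \<in> rnormal_gen C2 (zs k)" "ws \<longlonglongrightarrow> w"
      unfolding lnormal_gen_def by blast
    from h3[OF Pz a(1)] obtain N where N: "\<forall>k\<ge>N. P (zs k)" by blast
    have "C1 (\<lambda>k. zs (k+N)) z" using h4 h2 a(1) Pz by blast
    moreover have "\<forall>k. ws (k+N) \<in> rnormal_gen C1 (zs (k+N))"
    proof
      fix k have P: "P (zs (k+N))" using N by simp
      show "ws (k+N) \<in> rnormal_gen C1 (zs (k+N))" using a(2) req[OF P] by metis
    qed
    moreover have "(\<lambda>k. ws (k+N)) \<longlonglongrightarrow> w" using a(3) by (rule LIMSEQ_ignore_initial_segment)
    ultimately show "w \<in> lnormal_gen C1 z" unfolding lnormal_gen_def mem_Collect_eq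
      by (intro exI[of _ "\<lambda>k. zs (k+N)"] exI[of _ "\<lambda>k. ws (k+N)"] conjI)
  qed
qed

lemma SC_gen_eqI:
  fixes C1 C2 :: "(nat \<Rightarrow> 'a::euclidean_space \<times> 'a) \<Rightarrow> 'a \<times> 'a \<Rightarrow> bool"
  assumes h1: "\<And>zs z. C1 zs z \<Longrightarrow> C2 zs z"
  and h2: "\<And>zs z. P z \<Longrightarrow> C2 zs z \<Longrightarrow> C1 zs z"
  and h3: "\<And>zs z. P z \<Longrightarrow> C2 zs z \<Longrightarrow> \<exists>N. \<forall>k\<ge>N. P (zs k)"
  and h4: "\<And>zs z N. C2 zs z \<Longrightarrow> C2 (\<lambda>k. zs (k+N)) z"
  and Pz: "P z"
  shows "SC_gen C1 (tangent_gen C1) z = SC_gen C2 (tangent_gen C2) z"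
proof -
  have teq: "tangent_gen C1 y = tangent_gen C2 y" if "P y" for y
    by (rule tangent_gen_eqI) (use h1 h2 that in blast)
  show ?thesis
  proof (intro set_eqI iffI)
    fix L assume "L \<in> SC_gen C1 (tangent_gen C1) z"
    then obtain zs where a: "L \<in> Znn" "C1 zs z" "\<forall>k. tangent_gen C1 (zs k) \<in> Znn"
       "(\<lambda>k. subspace_dist (tangent_gen C1 (zs k)) L) \<longlonglongrightarrow> 0"
      unfolding SC_gen_def by blast
    from h3[OF Pz h1[OF a(2)]] obtain N where N: "\<forall>k\<ge>N. P (zs k)" by blast
    have "C2 (\<lambda>k. zs (k+N)) z" using h4 h1 a(2) by blast
    moreover have "\<forall>k. tangent_gen C2 (zs (k+N)) \<in> Znn"
    proof
      fix k have P: "P (zs (k+N))" using N by simp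
      show "tangent_gen C2 (zs (k+N)) \<in> Znn" using a(3) teq[OF P] by metis
    qed
    moreover have "(\<lambda>k. subspace_dist (tangent_gen C2 (zs (k+N))) L) \<longlonglongrightarrow> 0"
    proof -
      have "(\<lambda>k. subspace_dist (tangent_gen C1 (zs (k+N))) L) \<longlonglongrightarrow> 0"
        using a(4) by (rule LIMSEQ_ignore_initial_segment)
      moreover have "\<And>k. tangent_gen C1 (zs (k+N)) = tangent_gen C2 (zs (k+N))"
        using N teq by (metis le_add2)
      ultimately show ?thesis by simp
    qed
    ultimately show "L \<in> SC_gen C2 (tangent_gen C2) z" using a(1) unfolding SC_gen_def by blast
  next
    fix L assume "L \<in> SC_gen C2 (tangent_gen C2) z"
    then obtain zs where a: "L \<in> Znn" "C2 zs z" "\<forall>k. tangent_gen C2 (zs k) \<in> Znn"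
       "(\<lambda>k. subspace_dist (tangent_gen C2 (zs k)) L) \<longlonglongrightarrow> 0"
      unfolding SC_gen_def by blast
    from h3[OF Pz a(2)] obtain N where N: "\<forall>k\<ge>N. P (zs k)" by blast
    have "C1 (\<lambda>k. zs (k+N)) z" using h4 h2 a(2) Pz by blast
    moreover have "\<forall>k. tangent_gen C1 (zs (k+N)) \<in> Znn"
    proof
      fix k have P: "P (zs (k+N))" using N by simp
      show "tangent_gen C1 (zs (k+N)) \<in> Znn" using a(3) teq[OF P] by metis
    qed
    moreover have "(\<lambda>k. subspace_dist (tangent_gen C1 (zs (k+N))) L) \<longlonglongrightarrow> 0"
    proof -
      have "(\<lambda>k. subspace_dist (tangent_gen C2 (zs (k+N))) L) \<longlonglongrightarrow> 0"
        using a(4) by (rule LIMSEQ_ignore_initial_segment)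
      moreover have "\<And>k. tangent_gen C1 (zs (k+N)) = tangent_gen C2 (zs (k+N))"
        using N teq by (metis le_add2)
      ultimately show ?thesis by simp
    qed
    ultimately show "L \<in> SC_gen C1 (tangent_gen C1) z" using a(1) unfolding SC_gen_def by blast
  qed
qed

theorem lemma3p7:
  fixes f :: "'a::euclidean_space \<Rightarrow> ereal" and xb vb :: 'a
  assumes "\<forall>x. f x \<noteq> -\<infinity>"
    and "lsc f"
    and "\<bar>f xb\<bar> \<noteq> \<infinity>"
    and "vb \<in> subdiff f xb"
    and "prox_regular f xb vb"
    and "subdiff_continuous f xb vb"
  shows "\<exists>U V. open U \<and> open V \<and> xb \<in> U \<and> vb \<in> V \<and>
    (\<forall>x v. (x, v) \<in> gph_subdiff f \<and> x \<in> U \<and> v \<in> V \<longrightarrow>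
       prox_regular f x v \<and> subdiff_continuous f x v \<and>
       tangent_f f (x, v) = tangent_cone (gph_subdiff f) (x, v) \<and>
       rnormal_f f (x, v) = rnormal_cone (gph_subdiff f) (x, v) \<and>
       lnormal_f f (x, v) = lnormal_cone (gph_subdiff f) (x, v) \<and>
       D_f_subdiff f x v = D_subdiff f x v \<and>
       rD_f_subdiff f x v = rD_subdiff f x v \<and>
       lD_f_subdiff f x v = lD_subdiff f x v \<and>
       SC_f_subdiff f x v = SC_subdiff f x v \<and>
       SC_f_adj_subdiff f x v = SC_adj_subdiff f x v)"
  proof -
  define G where "G = gph_subdiff f"
  have Gmem: "(x, v) \<in> G \<longleftrightarrow> v \<in> subdiff f x" for x v by (simp add: G_def gph_subdiff_def)
  have fin: "\<bar>f x\<bar> \<noteq> \<infinity>" if "v \<in> subdiff f x" for x v using that by (simp add: subdiff_def)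
  obtain e r where e: "e > 0" and r: "r \<ge> 0" and PR: "\<And>x' x v. norm (x' - xb) < e \<Longrightarrow> v \<in> subdiff f x \<Longrightarrow> norm (x - xb) < e \<Longrightarrow>
         norm (v - vb) < e \<Longrightarrow> f x < f xb + ereal e \<Longrightarrow>
         f x' \<ge> f x + ereal (inner v (x' - x) - r / 2 * (norm (x' - x))\<^sup>2)"
    using assms(5) unfolding prox_regular_def by blast
  obtain fb where fb: "f xb = ereal fb" using assms(3) by (cases "f xb") auto
  have "\<exists>d>0. \<forall>x v. v \<in> subdiff f x \<and> norm (x - xb) < d \<and> norm (v - vb) < d \<longrightarrow> f x < f xb + ereal e"
  proof (rule ccontr)
    assume "\<not> ?thesis"
    then have "\<forall>n. \<exists>x v. v \<in> subdiff f x \<and> norm (x - xb) < inverse (real (Suc n)) \<and>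
       norm (v - vb) < inverse (real (Suc n)) \<and> \<not> f x < f xb + ereal e"
      by (metis inverse_positive_iff_positive of_nat_0_less_iff zero_less_Suc)
    then obtain X W where XW: "\<And>n. W n \<in> subdiff f (X n)" "\<And>n. norm (X n - xb) < inverse (real (Suc n))"
      "\<And>n. norm (W n - vb) < inverse (real (Suc n))" "\<And>n. \<not> f (X n) < f xb + ereal e"
      by metis
    have X: "X \<longlonglongrightarrow> xb"
    proof -
      have "(\<lambda>n. X n - xb) \<longlonglongrightarrow> 0"
        by (rule Lim_null_comparison[OF _ LIMSEQ_inverse_real_of_nat])
           (intro always_eventually allI less_imp_le XW(2))
      then show ?thesis by (rule LIM_zero_cancel)
    qed
    have W: "W \<longlonglongrightarrow> vb"
    proof -
      have "(\<lambda>n. W n - vb) \<longlonglongrightarrow> 0"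
        by (rule Lim_null_comparison[OF _ LIMSEQ_inverse_real_of_nat])
           (intro always_eventually allI less_imp_le XW(3))
      then show ?thesis by (rule LIM_zero_cancel)
    qed
    have "(\<lambda>k. f (X k)) \<longlonglongrightarrow> f xb" using assms(6) XW(1) X W unfolding subdiff_continuous_def by blast
    moreover have "f xb < f xb + ereal e" using fb e by simp
    ultimately have "eventually (\<lambda>k. f (X k) < f xb + ereal e) sequentially" by (rule order_tendstoD)
    then show False using XW(4) by (simp add: eventually_sequentially)
  qed
  then obtain d where d: "d > 0" and dP: "\<And>x v. v \<in> subdiff f x \<Longrightarrow> norm (x - xb) < d \<Longrightarrow> norm (v - vb) < d \<Longrightarrow> f x < f xb + ereal e"
    by blast
  define d0 where "d0 = min d e"
  have d0: "d0 > 0" using d e by (simp add: d0_def)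
  define P where "P z \<longleftrightarrow> z \<in> G \<and> z \<in> ball xb d0 \<times> ball vb d0" for z
  have KI: "f y \<ge> f x + ereal (inner v (y - x) - r / 2 * (norm (y - x))\<^sup>2)"
    if "v \<in> subdiff f x" "norm (x - xb) < d0" "norm (v - vb) < d0" "norm (y - xb) < d0" for x v y
    using that PR[of y v x] dP[of v x] by (simp add: d0_def)
  have Pmem: "P (x, v) \<longleftrightarrow> v \<in> subdiff f x \<and> norm (x - xb) < d0 \<and> norm (v - vb) < d0" for x v
    by (simp add: P_def Gmem dist_norm norm_minus_commute)
  have claimA: "(\<lambda>k. f (fst (zs k))) \<longlonglongrightarrow> f x"
    if Pz: "P (x, v)" and zG: "\<forall>k. zs k \<in> G" and zl: "zs \<longlonglongrightarrow> (x, v)" for zs x v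
  proof -
    have ev: "eventually (\<lambda>k. zs k \<in> ball xb d0 \<times> ball vb d0) sequentially"
      using zl Pz unfolding P_def by (intro topological_tendstoD) (auto intro: open_Times)
    have PzE: "v \<in> subdiff f x" "norm (x - xb) < d0" "norm (v - vb) < d0" using Pz Pmem by auto
    obtain fx where fx: "f x = ereal fx" using fin[OF PzE(1)] by (cases "f x") auto
    have xl: "(\<lambda>k. fst (zs k)) \<longlonglongrightarrow> x" using tendsto_fst[OF zl] by simp
    have vl: "(\<lambda>k. snd (zs k)) \<longlonglongrightarrow> v" using tendsto_snd[OF zl] by simp
    have lo: "(\<lambda>k. ereal (fx + (inner v (fst (zs k) - x) - r / 2 * (norm (fst (zs k) - x))\<^sup>2))) \<longlonglongrightarrow> f x"
    proof -
      have "(\<lambda>k. fx + (inner v (fst (zs k) - x) - r / 2 * (norm (fst (zs k) - x))\<^sup>2)) \<longlonglongrightarrow>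
            fx + (inner v (x - x) - r / 2 * (norm (x - x))\<^sup>2)"
        by (intro tendsto_intros xl)
      then show ?thesis unfolding fx by (intro tendsto_intros) simp
    qed
    have hi: "(\<lambda>k. ereal (fx - (inner (snd (zs k)) (x - fst (zs k)) - r / 2 * (norm (x - fst (zs k)))\<^sup>2))) \<longlonglongrightarrow> f x"
    proof -
      have "(\<lambda>k. fx - (inner (snd (zs k)) (x - fst (zs k)) - r / 2 * (norm (x - fst (zs k)))\<^sup>2)) \<longlonglongrightarrow>
            fx - (inner v (x - x) - r / 2 * (norm (x - x))\<^sup>2)"
        by (intro tendsto_intros xl vl)
      then show ?thesis unfolding fx by (intro tendsto_intros) simp
    qed
    have ineqs: "ereal (fx + (inner v (fst (zs k) - x) - r / 2 * (norm (fst (zs k) - x))\<^sup>2)) \<le> f (fst (zs k)) \<and>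
        f (fst (zs k)) \<le> ereal (fx - (inner (snd (zs k)) (x - fst (zs k)) - r / 2 * (norm (x - fst (zs k)))\<^sup>2))"
      if "zs k \<in> ball xb d0 \<times> ball vb d0" for k
    proof -
      obtain y w where yw: "zs k = (y, w)" by (cases "zs k")
      have wy: "w \<in> subdiff f y" using zG yw Gmem by metis
      have ny: "norm (y - xb) < d0" "norm (w - vb) < d0" using that yw by (auto simp: dist_norm norm_minus_commute)
      obtain fy where fy: "f y = ereal fy" using fin[OF wy] by (cases "f y") auto
      have 1: "f y \<ge> f x + ereal (inner v (y - x) - r / 2 * (norm (y - x))\<^sup>2)"
        by (rule KI[OF PzE ny(1)])
      have 2: "f x \<ge> f y + ereal (inner w (x - y) - r / 2 * (norm (x - y))\<^sup>2)"
        by (rule KI[OF wy ny PzE(2)])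
      show ?thesis using 1 2 unfolding yw fx fy by (simp add: fy)
    qed
    have ev1: "eventually (\<lambda>k. ereal (fx + (inner v (fst (zs k) - x) - r / 2 * (norm (fst (zs k) - x))\<^sup>2)) \<le> f (fst (zs k))) sequentially"
      by (rule eventually_mono[OF ev]) (rule conjunct1[OF ineqs])
    have ev2: "eventually (\<lambda>k. f (fst (zs k)) \<le> ereal (fx - (inner (snd (zs k)) (x - fst (zs k)) - r / 2 * (norm (x - fst (zs k)))\<^sup>2))) sequentially"
      by (rule eventually_mono[OF ev]) (rule conjunct2[OF ineqs])
    show ?thesis
      by (rule tendsto_sandwich[OF ev1 ev2 lo hi])
  qed
  define C1 where "C1 = f_attentive_conv f"
  define C2 where "C2 = conv_in G"
  have h1: "\<And>zs z. C1 zs z \<Longrightarrow> C2 zs z"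
    unfolding C1_def C2_def f_attentive_conv_def conv_in_def G_def by blast
  have h2: "\<And>zs z. P z \<Longrightarrow> C2 zs z \<Longrightarrow> C1 zs z"
  proof -
    fix zs z assume "P z" "C2 zs z"
    then show "C1 zs z" unfolding C1_def C2_def f_attentive_conv_def conv_in_def G_def[symmetric]
      using claimA by (cases z) auto
  qed
  have h3: "\<And>zs z. P z \<Longrightarrow> C2 zs z \<Longrightarrow> \<exists>N. \<forall>k\<ge>N. P (zs k)"
  proof -
    fix zs z assume Pz: "P z" and c: "C2 zs z"
    have "eventually (\<lambda>k. zs k \<in> ball xb d0 \<times> ball vb d0) sequentially"
    proof (rule topological_tendstoD)
      show "zs \<longlonglongrightarrow> z" using c unfolding C2_def conv_in_def by blast
      show "open (ball xb d0 \<times> ball vb d0)" by (intro open_Times open_ball)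
      show "z \<in> ball xb d0 \<times> ball vb d0" using Pz unfolding P_def by blast
    qed
    then show "\<exists>N. \<forall>k\<ge>N. P (zs k)" using c unfolding P_def C2_def conv_in_def eventually_sequentially by auto
  qed
  have h4: "\<And>zs z N. C2 zs z \<Longrightarrow> C2 (\<lambda>k. zs (k+N)) z"
    unfolding C2_def conv_in_def using LIMSEQ_ignore_initial_segment by blast
  show ?thesis
  proof (intro exI conjI allI impI)
    show "open (ball xb d0)" "open (ball vb d0)" "xb \<in> ball xb d0" "vb \<in> ball vb d0" using d0 by auto
    fix x v assume H: "(x, v) \<in> gph_subdiff f \<and> x \<in> ball xb d0 \<and> v \<in> ball vb d0"
    have Pz: "P (x, v)" using H by (simp add: P_def G_def)
    have PzE: "v \<in> subdiff f x" "norm (x - xb) < d0" "norm (v - vb) < d0" using Pz Pmem by auto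
    show "prox_regular f x v"
      unfolding prox_regular_def
    proof (intro conjI)
      show "\<bar>f x\<bar> \<noteq> \<infinity>" by (rule fin[OF PzE(1)])
      show "v \<in> subdiff f x" by (rule PzE(1))
      define e' where "e' = min (d0 - norm (x - xb)) (d0 - norm (v - vb))"
      have e': "e' > 0" using PzE by (simp add: e'_def)
      show "\<exists>e>0. \<exists>r\<ge>0. \<forall>x' y w. norm (x' - x) < e \<and> w \<in> subdiff f y \<and> norm (y - x) < e \<and>
         norm (w - v) < e \<and> f y < f x + ereal e \<longrightarrow>
         f x' \<ge> f y + ereal (inner w (x' - y) - r / 2 * (norm (x' - y))\<^sup>2)"
      proof -
        have "\<forall>x' y w. norm (x' - x) < e' \<and> w \<in> subdiff f y \<and> norm (y - x) < e' \<and>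
         norm (w - v) < e' \<and> f y < f x + ereal e' \<longrightarrow>
         f x' \<ge> f y + ereal (inner w (x' - y) - r / 2 * (norm (x' - y))\<^sup>2)"
        proof (intro allI impI)
        fix x' y w assume A: "norm (x' - x) < e' \<and> w \<in> subdiff f y \<and> norm (y - x) < e' \<and>
         norm (w - v) < e' \<and> f y < f x + ereal e'"
        have t1: "norm (x' - xb) < d0" using A norm_triangle_lt[of "x' - x" "x - xb"] by (simp add: e'_def)
        have t2: "norm (y - xb) < d0" using A norm_triangle_lt[of "y - x" "x - xb"] by (simp add: e'_def)
        have t3: "norm (w - vb) < d0" using A norm_triangle_lt[of "w - v" "v - vb"] by (simp add: e'_def)
        show "f x' \<ge> f y + ereal (inner w (x' - y) - r / 2 * (norm (x' - y))\<^sup>2)"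
          using KI[of w y x'] A t1 t2 t3 by blast
        qed
        then show ?thesis using e' r by blast
      qed
    qed
    show "subdiff_continuous f x v"
      unfolding subdiff_continuous_def
    proof (intro allI impI)
      fix xs vs assume A: "(\<forall>k. vs k \<in> subdiff f (xs k)) \<and> xs \<longlonglongrightarrow> x \<and> vs \<longlonglongrightarrow> v"
      have "(\<lambda>k. f (fst (xs k, vs k))) \<longlonglongrightarrow> f x"
        by (rule claimA[OF Pz]) (use A Gmem in \<open>auto intro: tendsto_Pair\<close>)
      then show "(\<lambda>k. f (xs k)) \<longlonglongrightarrow> f x" by simp
    qed
    have T: "tangent_f f (x, v) = tangent_cone (gph_subdiff f) (x, v)"
      using tangent_gen_eqI[of C1 "(x,v)" C2] h1 h2[OF Pz] unfolding C1_def C2_def G_def by blast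
    have RN: "rnormal_f f (x, v) = rnormal_cone (gph_subdiff f) (x, v)"
      unfolding rnormal_gen_def T ..
    have LN: "lnormal_f f (x, v) = lnormal_cone (gph_subdiff f) (x, v)"
      using lnormal_gen_eqI[of C1 C2 P, OF h1 h2 h3 h4 Pz] unfolding C1_def C2_def G_def .
    have SC: "SC_f_subdiff f x v = SC_subdiff f x v"
      using SC_gen_eqI[of C1 C2 P, OF h1 h2 h3 h4 Pz] unfolding C1_def C2_def G_def SC_f_subdiff_def SC_subdiff_def .
    show "tangent_f f (x, v) = tangent_cone (gph_subdiff f) (x, v)" by (rule T)
    show "rnormal_f f (x, v) = rnormal_cone (gph_subdiff f) (x, v)" by (rule RN)
    show "lnormal_f f (x, v) = lnormal_cone (gph_subdiff f) (x, v)" by (rule LN)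
    show "D_f_subdiff f x v = D_subdiff f x v" unfolding D_f_subdiff_def D_subdiff_def T ..
    show "rD_f_subdiff f x v = rD_subdiff f x v" unfolding rD_f_subdiff_def rD_subdiff_def RN ..
    show "lD_f_subdiff f x v = lD_subdiff f x v" unfolding lD_f_subdiff_def lD_subdiff_def LN ..
    show "SC_f_subdiff f x v = SC_subdiff f x v" by (rule SC)
    show "SC_f_adj_subdiff f x v = SC_adj_subdiff f x v" unfolding SC_f_adj_subdiff_def SC_adj_subdiff_def SC ..
  qed
qed

end
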